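(* Let $T>0$, $\alpha\in(\tfrac74,2)$, and let $v^N:[0,T]\to L^2(0,1)$, $N\ge1$, be continuous functions with $\sup_N\sup_{t\in[0,T]}|v^N(t)|_{L^2}<\infty$. Define $y^N(t)=\int_0^te^{-A^{\alpha/2}(t-s)}P_N\partial_x\big((v^N(s))^2\big)\,ds$. Then $\sup_N\sup_{t\in[0,T]}|y^N(t)|_{L^4}<\infty$.
   Context: Let $e_k(x)=\sqrt2\sin(k\pi x)$, $k\ge1$, be the $L^2(0,1)$-orthonormal eigenfunctions of $A=-\partial_x^2$ with Dirichlet boundary conditions on $(0,1)$, with eigenvalues $\lambda_k=(k\pi)^2$. For $g\in L^1(0,1)$, $\partial_xg$ is the distribution with coefficients $\langle\partial_xg,e_k\rangle:=-\int_0^1g(x)e_k'(x)dx$; $e^{-A^{\alpha/2}t}P_N\partial_xg=\sum_{k=1}^Ne^{-\lambda_k^{\alpha/2}t}\langle\partial_xg,e_k\rangle e_k$ (and $e^{-A^{\alpha/2}t}w=\sum_ke^{-\lambda_k^{\alpha/2}t}\langle w,e_k\rangle e_k$ in general). *)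

theory Defs
  imports "HOL-Analysis.Analysis"
begin

text \<open>Functions on (0,1) are represented as real-valued functions on the reals; only
  their values on [0,1] matter (the endpoints are a null set).\<close>

definition Lp_norm :: "real \<Rightarrow> (real \<Rightarrow> real) \<Rightarrow> real" where
  "Lp_norm p f = (LINT x:{0..1}|lborel. \<bar>f x\<bar> powr p) powr (1 / p)"

definition in_L2 :: "(real \<Rightarrow> real) \<Rightarrow> bool" where
  "in_L2 f \<longleftrightarrow> set_borel_measurable lborel {0..1} f
      \<and> set_integrable lborel {0..1} (\<lambda>x. (f x)\<^sup>2)"

definition efun :: "nat \<Rightarrow> real \<Rightarrow> real" where
  "efun k x = sqrt 2 * sin (real k * pi * x)"

definition efun' :: "nat \<Rightarrow> real \<Rightarrow> real" where
  "efun' k x = sqrt 2 * real k * pi * cos (real k * pi * x)"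

definition eigval :: "nat \<Rightarrow> real" where
  "eigval k = (real k * pi)\<^sup>2"

text \<open>Coefficient <d_x g, e_k> := - int_0^1 g(x) e_k'(x) dx.\<close>
definition dx_coeff :: "(real \<Rightarrow> real) \<Rightarrow> nat \<Rightarrow> real" where
  "dx_coeff g k = - (LINT x:{0..1}|lborel. g x * efun' k x)"

definition yN :: "real \<Rightarrow> nat \<Rightarrow> (real \<Rightarrow> real \<Rightarrow> real) \<Rightarrow> real \<Rightarrow> real \<Rightarrow> real" where
  "yN \<alpha> N w t x = (LBINT s=0..t.
      (\<Sum>k\<in>{1..N}. exp (- (eigval k powr (\<alpha> / 2)) * (t - s))
                    * dx_coeff (\<lambda>z. (w s z)\<^sup>2) k * efun k x))"

end

theory Submission
  imports Defs "HOL-Library.Log_Nat"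
begin


lemma cos_int_integral:
  fixes m :: int
  shows "((\<lambda>x. cos (real_of_int m * pi * x)) has_integral (if m = 0 then 1 else 0)) {0..1}"
proof (cases "m = 0")
  case True
  then show ?thesis using has_integral_const_real[of "1::real" 0 1] by simp
next
  case False
  have d: "((\<lambda>x. sin (real_of_int m * pi * x) / (real_of_int m * pi)) has_vector_derivative
      cos (real_of_int m * pi * x)) (at x within {0..1})" for x
    using False
    by (auto intro!: derivative_eq_intros simp: has_real_derivative_iff_has_vector_derivative[symmetric])
  have "sin (real_of_int m * pi) = 0"
    by (metis sin_zero_iff_int2 Ints_of_int)
  with fundamental_theorem_of_calculus[of 0 1, OF _ d] False show ?thesis by simp
qed

lemma efun_prod: "efun k x * efun l x =
   cos (real_of_int (int k - int l) * pi * x) - cos (real_of_int (int k + int l) * pi * x)"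
  unfolding efun_def by (simp add: cos_diff cos_add algebra_simps)

lemma efun_orth:
  assumes "k \<ge> 1" "l \<ge> 1"
  shows "((\<lambda>x. efun k x * efun l x) has_integral (if k = l then 1 else 0)) {0..1}"
proof -
  have "((\<lambda>x. cos (real_of_int (int k - int l) * pi * x) - cos (real_of_int (int k + int l) * pi * x))
      has_integral ((if int k - int l = 0 then 1 else 0) - (if int k + int l = 0 then 1 else 0))) {0..1}"
    by (intro has_integral_diff cos_int_integral)
  then show ?thesis using assms by (simp add: efun_prod)
qed

lemma efun_cont[continuous_intros]: "continuous_on S (efun k)"
  unfolding efun_def by (intro continuous_intros)

lemma sum_efun_cont: "continuous_on S (\<lambda>x. \<Sum>k\<in>K. c k * efun k x)"
  unfolding efun_def by (intro continuous_intros)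

lemma L2_sum:
  assumes "finite S" "S \<subseteq> {1..}"
  shows "integral {0..1} (\<lambda>x. (\<Sum>k\<in>S. c k * efun k x)^2) = (\<Sum>k\<in>S. (c k)^2)"
proof -
  have "integral {0..1} (\<lambda>x. (\<Sum>k\<in>S. c k * efun k x)^2)
      = integral {0..1} (\<lambda>x. \<Sum>k\<in>S. \<Sum>l\<in>S. c k * c l * (efun k x * efun l x))"
    by (simp add: power2_eq_square sum_product algebra_simps)
  also have "... = (\<Sum>k\<in>S. \<Sum>l\<in>S. c k * c l * (if k = l then 1 else 0))"
  proof -
    have i: "(\<lambda>x. efun k x * efun l x) integrable_on {0..1}" for k l
      by (intro integrable_continuous_real continuous_intros)
    have e: "integral {0..1} (\<lambda>x. c k * c l * (efun k x * efun l x)) = c k * c l * (if k = l then 1 else 0)"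
      if "k \<in> S" "l \<in> S" for k l
      using that assms efun_orth[of k l, THEN integral_unique] by (auto simp: subset_iff)
    have i2: "(\<lambda>x. c k * c l * (efun k x * efun l x)) integrable_on {0..1}" for k l
      by (intro integrable_continuous_real continuous_intros)
    have i3: "(\<lambda>x. \<Sum>l\<in>S. c k * c l * (efun k x * efun l x)) integrable_on {0..1}" for k
      by (intro integrable_continuous_real continuous_intros)
    have "integral {0..1} (\<lambda>x. \<Sum>k\<in>S. \<Sum>l\<in>S. c k * c l * (efun k x * efun l x))
        = (\<Sum>k\<in>S. integral {0..1} (\<lambda>x. \<Sum>l\<in>S. c k * c l * (efun k x * efun l x)))"
      using assms(1) i3 by (rule integral_sum)
    also have "... = (\<Sum>k\<in>S. \<Sum>l\<in>S. integral {0..1} (\<lambda>x. c k * c l * (efun k x * efun l x)))"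
      using assms(1) i2 by (simp add: integral_sum)
    also have "... = (\<Sum>k\<in>S. \<Sum>l\<in>S. c k * c l * (if k = l then 1 else 0))"
      using e by (intro sum.cong refl) auto
    finally show ?thesis .
  qed
  also have "... = (\<Sum>k\<in>S. (c k)^2)"
    using assms by (simp add: power2_eq_square if_distrib cong: if_cong)
  finally show ?thesis .
qed

lemma efun_abs: "\<bar>efun k x\<bar> \<le> sqrt 2"
  unfolding efun_def by (simp add: abs_mult)

lemma block4:
  fixes M :: real
  assumes "finite S" "S \<subseteq> {1..}" "\<And>k. k \<in> S \<Longrightarrow> \<bar>c k\<bar> \<le> M"
  shows "integral {0..1} (\<lambda>x. (\<Sum>k\<in>S. c k * efun k x)^4) \<le> 2 * (card S * M)^2 * (card S * M^2)"
proof -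
  define g where "g x = (\<Sum>k\<in>S. c k * efun k x)" for x
  have M0: "S \<noteq> {} \<Longrightarrow> 0 \<le> M" using assms(3) by force
  have gb: "\<bar>g x\<bar> \<le> sqrt 2 * (card S * M)" for x
  proof -
    have "\<bar>g x\<bar> \<le> (\<Sum>k\<in>S. \<bar>c k * efun k x\<bar>)" unfolding g_def by (rule sum_abs)
    also have "... \<le> (\<Sum>k\<in>S. M * sqrt 2)"
      by (intro sum_mono) (auto simp: abs_mult intro!: mult_mono assms(3) efun_abs M0)
    finally show ?thesis by (simp add: algebra_simps)
  qed
  have pw: "(g x)^4 \<le> 2 * (card S * M)^2 * (g x)^2" for x
  proof -
    have "(g x)^2 \<le> (sqrt 2 * (card S * M))^2"
      using power_mono[OF gb[of x] abs_ge_zero, of 2] by simp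
    hence "(g x)^2 * (g x)^2 \<le> (sqrt 2 * (card S * M))^2 * (g x)^2"
      by (intro mult_right_mono) auto
    moreover have "(sqrt 2 * (card S * M))^2 = 2 * (card S * M)^2" by (simp add: power_mult_distrib)
    moreover have "(g x)^4 = (g x)^2 * (g x)^2" by (simp flip: power_add)
    ultimately show ?thesis by metis
  qed
  have "integral {0..1} (\<lambda>x. (g x)^4) \<le> integral {0..1} (\<lambda>x. 2 * (card S * M)^2 * (g x)^2)"
    unfolding g_def using pw[unfolded g_def]
    by (intro integral_le integrable_continuous_real continuous_intros) auto
  also have "... = 2 * (card S * M)^2 * (\<Sum>k\<in>S. (c k)^2)"
    unfolding g_def using L2_sum[OF assms(1,2)] by simp
  also have "... \<le> 2 * (card S * M)^2 * (card S * M^2)"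
  proof -
    have "(\<Sum>k\<in>S. (c k)^2) \<le> (\<Sum>k\<in>S. M^2)"
      using assms(3) by (intro sum_mono) (metis power_mono abs_ge_zero power2_abs)
    thus ?thesis by (intro mult_left_mono) auto
  qed
  finally show ?thesis unfolding g_def .
qed

lemma holder4:
  fixes g a :: "'a \<Rightarrow> real"
  assumes "finite J" "\<And>j. j \<in> J \<Longrightarrow> a j > 0"
  shows "(\<Sum>j\<in>J. g j)^4 \<le> (\<Sum>j\<in>J. a j)^3 * (\<Sum>j\<in>J. (g j)^4 / (a j)^3)"
proof -
  have A0: "0 \<le> (\<Sum>j\<in>J. a j)" using assms by (intro sum_nonneg) (auto intro: less_imp_le)
  have 1: "(\<Sum>j\<in>J. g j)^2 \<le> (\<Sum>j\<in>J. a j) * (\<Sum>j\<in>J. (g j)^2 / a j)"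
  proof -
    have "(\<Sum>j\<in>J. g j) = (\<Sum>j\<in>J. sqrt (a j) * (g j / sqrt (a j)))"
      by (intro sum.cong refl) (auto simp: field_simps dest!: assms(2))
    hence "(\<Sum>j\<in>J. g j)^2 \<le> (\<Sum>j\<in>J. (sqrt (a j))^2) * (\<Sum>j\<in>J. (g j / sqrt (a j))^2)"
      using Cauchy_Schwarz_ineq_sum by metis
    also have "... = (\<Sum>j\<in>J. a j) * (\<Sum>j\<in>J. (g j)^2 / a j)"
      using assms by (intro arg_cong2[where f="(*)"] sum.cong) (auto simp: power_divide less_imp_le)
    finally show ?thesis .
  qed
  have 2: "(\<Sum>j\<in>J. (g j)^2 / a j)^2 \<le> (\<Sum>j\<in>J. a j) * (\<Sum>j\<in>J. (g j)^4 / (a j)^3)"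
  proof -
    have "(\<Sum>j\<in>J. (g j)^2 / a j) = (\<Sum>j\<in>J. sqrt (a j) * ((g j)^2 / (a j * sqrt (a j))))"
      by (intro sum.cong refl) (auto simp: field_simps dest!: assms(2))
    hence "(\<Sum>j\<in>J. (g j)^2 / a j)^2 \<le> (\<Sum>j\<in>J. (sqrt (a j))^2) * (\<Sum>j\<in>J. ((g j)^2 / (a j * sqrt (a j)))^2)"
      using Cauchy_Schwarz_ineq_sum by metis
    also have "... = (\<Sum>j\<in>J. a j) * (\<Sum>j\<in>J. (g j)^4 / (a j)^3)"
    proof (intro arg_cong2[where f="(*)"] sum.cong refl)
      fix j assume j: "j \<in> J"
      then have p: "a j > 0" using assms(2) by auto
      show "(sqrt (a j))^2 = a j" using p by simp
      have "(a j * sqrt (a j))^2 = (a j)^3" using p by (simp add: power_mult_distrib power3_eq_cube power2_eq_square)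
      moreover have "((g j)^2)^2 = (g j)^4" by (simp add: power_mult[symmetric])
      ultimately show "((g j)^2 / (a j * sqrt (a j)))^2 = (g j)^4 / (a j)^3"
        by (simp only: power_divide)
    qed
    finally show ?thesis .
  qed
  have "(\<Sum>j\<in>J. g j)^4 = ((\<Sum>j\<in>J. g j)^2)^2" by simp
  also have "... \<le> ((\<Sum>j\<in>J. a j) * (\<Sum>j\<in>J. (g j)^2 / a j))^2"
    using 1 by (intro power_mono) auto
  also have "... = (\<Sum>j\<in>J. a j)^2 * (\<Sum>j\<in>J. (g j)^2 / a j)^2" by (simp add: power_mult_distrib)
  also have "... \<le> (\<Sum>j\<in>J. a j)^2 * ((\<Sum>j\<in>J. a j) * (\<Sum>j\<in>J. (g j)^4 / (a j)^3))"
    using 2 by (intro mult_left_mono) auto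
  also have "... = (\<Sum>j\<in>J. a j)^3 * (\<Sum>j\<in>J. (g j)^4 / (a j)^3)"
    by (simp only: power2_eq_square power3_eq_cube mult.assoc)
  finally show ?thesis .
qed

lemma dyadic_index:
  assumes "k \<ge> (1::nat)"
  shows "2 ^ (floorlog 2 k - 1) \<le> k \<and> k < 2 ^ (floorlog 2 k - 1 + 1)"
proof -
  have b: "2 ^ (floorlog 2 k - 1) \<le> k \<and> k < 2 ^ (floorlog 2 k)"
    using floorlog_bounds[of k 2] assms by simp
  have "floorlog 2 k \<ge> 1" using assms by (simp add: floorlog_def)
  then have "floorlog 2 k - 1 + 1 = floorlog 2 k" by simp
  with b show ?thesis by simp
qed

lemma block_powr:
  fixes B \<beta> :: real
  assumes "0 \<le> B"
  shows "2 * (2^j * (B * 2 powr (- \<beta> * j)))^2 * (2^j * (B * 2 powr (- \<beta> * j))^2)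
         = 2 * B^4 * (2 powr ((3 - 4*\<beta>)/4))^(4*j)"
proof -
  have "(2 powr ((3 - 4*\<beta>)/4))^(4*j) = 2 powr ((3 - 4*\<beta>)/4 * real (4*j))"
    by (simp add: powr_realpow[symmetric] powr_powr)
  also have "... = (2::real)^(3*j) * (2 powr (- \<beta> * j))^4"
    by (simp add: powr_realpow[symmetric] powr_powr powr_add[symmetric] algebra_simps
                  flip: powr_realpow)
      (rule arg_cong[where f="(powr) 2"], simp add: field_simps)
  finally have e: "(2 powr ((3 - 4*\<beta>)/4))^(4*j) = (2::real)^(3*j) * (2 powr (- \<beta> * j))^4" .
  show ?thesis unfolding e by (simp add: power_mult_distrib power_mult power_add algebra_simps
       numeral_eq_Suc)
qed

lemma L4_bound:
  fixes B \<beta> :: real and c :: "nat \<Rightarrow> real"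
  assumes \<beta>: "3/4 < \<beta>" and B: "0 \<le> B"
    and c: "\<And>k. k \<in> {1..N} \<Longrightarrow> \<bar>c k\<bar> \<le> B * real k powr (- \<beta>)"
  shows "integral {0..1} (\<lambda>x. (\<Sum>k\<in>{1..N}. c k * efun k x)^4)
           \<le> 2 * B^4 / (1 - 2 powr ((3 - 4*\<beta>)/4))^4"
proof -
  define \<rho> :: real where "\<rho> = 2 powr ((3 - 4*\<beta>)/4)"
  define h where "h k = floorlog 2 k - 1" for k :: nat
  define S where "S j = {k\<in>{1..N}. h k = j}" for j
  define g where "g j x = (\<Sum>k\<in>S j. c k * efun k x)" for j x
  have \<rho>0: "0 < \<rho>" unfolding \<rho>_def by simp
  have \<rho>1: "\<rho> < 1" unfolding \<rho>_def using \<beta> by (intro powr_less_one) auto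
  have hb: "2 ^ h k \<le> k \<and> k < 2 ^ (h k + 1)" if "k \<ge> 1" for k
    unfolding h_def using dyadic_index[OF that] .
  have hN: "h ` {1..N} \<subseteq> {..<N}"
  proof
    fix j assume "j \<in> h ` {1..N}"
    then obtain k where k: "k \<in> {1..N}" "j = h k" by auto
    have "j < 2 ^ j" by (rule less_exp)
    also have "... \<le> k" using hb[of k] k by auto
    finally show "j \<in> {..<N}" using k by auto
  qed
  have decomp: "(\<Sum>k\<in>{1..N}. c k * efun k x) = (\<Sum>j<N. g j x)" for x
    unfolding g_def S_def using sum.group[of "{1..N}" "{..<N}" h "\<lambda>k. c k * efun k x"] hN by simp
  have gcont: "continuous_on {0..1} (g j)" for j unfolding g_def by (intro continuous_intros)
  have gj: "integral {0..1} (\<lambda>x. (g j x)^4) \<le> 2 * B^4 * \<rho>^(4*j)" for j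
  proof -
    define M where "M = B * 2 powr (- \<beta> * j)"
    have M0: "0 \<le> M" unfolding M_def using B by simp
    have Sfin: "finite (S j)" "S j \<subseteq> {1..}" unfolding S_def by auto
    have cM: "\<bar>c k\<bar> \<le> M" if "k \<in> S j" for k
    proof -
      have k1: "k \<in> {1..N}" and hk: "h k = j" using that unfolding S_def by auto
      have kj: "(2::real) ^ j \<le> real k"
        using hb[of k] k1 hk by (metis atLeastAtMost_iff of_nat_le_iff of_nat_numeral of_nat_power)
      have "real k powr (- \<beta>) \<le> (2 ^ j) powr (- \<beta>)"
        using kj \<beta> by (intro powr_mono2') auto
      also have "(2 ^ j) powr (- \<beta>) = (2::real) powr (- \<beta> * j)"
      proof -
        have "(2::real) ^ j = 2 powr (real j)" by (simp add: powr_realpow)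
        then show ?thesis by (simp add: powr_powr mult.commute)
      qed
      finally show ?thesis unfolding M_def using c[OF k1] B by (meson mult_left_mono order_trans)
    qed
    have card: "card (S j) \<le> 2 ^ j"
    proof -
      have "S j \<subseteq> {2^j..<2^(j+1)}" using hb unfolding S_def by auto
      hence "card (S j) \<le> card {2^j..<(2::nat)^(j+1)}" by (intro card_mono) auto
      thus ?thesis by simp
    qed
    have "integral {0..1} (\<lambda>x. (g j x)^4) \<le> 2 * (card (S j) * M)^2 * (card (S j) * M^2)"
      unfolding g_def using block4[OF Sfin cM] by simp
    also have "... \<le> 2 * (2^j * M)^2 * (2^j * M^2)"
    proof -
      have r: "real (card (S j)) \<le> 2^j" using card by (metis of_nat_le_iff of_nat_numeral of_nat_power)
      have "(card (S j) * M)^2 \<le> (2^j * M)^2"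
        using r M0 by (intro power_mono mult_right_mono) auto
      moreover have "card (S j) * M^2 \<le> 2^j * M^2" using r by (intro mult_right_mono) auto
      ultimately show ?thesis
        using card by (intro mult_mono) (auto intro!: mult_nonneg_nonneg)
    qed
    also have "... = 2 * B^4 * \<rho>^(4*j)" unfolding M_def \<rho>_def by (rule block_powr[OF B])
    finally show ?thesis .
  qed
  have pw: "(\<Sum>k\<in>{1..N}. c k * efun k x)^4 \<le> (\<Sum>j<N. \<rho>^j)^3 * (\<Sum>j<N. (g j x)^4 / (\<rho>^j)^3)" for x
    unfolding decomp using holder4[of "{..<N}" "\<lambda>j. \<rho>^j" "\<lambda>j. g j x"] \<rho>0 by simp
  have "integral {0..1} (\<lambda>x. (\<Sum>k\<in>{1..N}. c k * efun k x)^4)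
      \<le> integral {0..1} (\<lambda>x. (\<Sum>j<N. \<rho>^j)^3 * (\<Sum>j<N. (g j x)^4 / (\<rho>^j)^3))"
    using pw gcont \<rho>0 by (intro integral_le integrable_continuous_real continuous_intros) 
      (auto intro: continuous_on_subset simp: g_def)
  also have "... = (\<Sum>j<N. \<rho>^j)^3 * (\<Sum>j<N. integral {0..1} (\<lambda>x. (g j x)^4) / (\<rho>^j)^3)"
  proof -
    have i: "(\<lambda>x. (g j x)^4 / (\<rho>^j)^3) integrable_on {0..1}" for j
      using \<rho>0 by (intro integrable_continuous_real continuous_intros gcont) auto
    show ?thesis
      by (simp add: integral_sum[OF _ i] integrable_sum[OF _ i] integral_divide)
  qed
  also have "... \<le> (\<Sum>j<N. \<rho>^j)^3 * (\<Sum>j<N. 2 * B^4 * \<rho>^j)"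
  proof (intro mult_left_mono sum_mono)
    fix j
    have "integral {0..1} (\<lambda>x. (g j x)^4) / (\<rho>^j)^3 \<le> 2 * B^4 * \<rho>^(4*j) / (\<rho>^j)^3"
      using gj[of j] \<rho>0 by (intro divide_right_mono) auto
    also have "... = 2 * B^4 * \<rho>^j"
    proof -
      have e: "\<rho>^(4*j) = (\<rho>^j)^4" by (simp only: mult.commute[of 4 j] power_mult)
      have "(\<rho>^j)^4 / (\<rho>^j)^3 = \<rho>^j" using \<rho>0 by (simp add: power4_eq_xxxx power3_eq_cube)
      then show ?thesis unfolding e by (metis times_divide_eq_right)
    qed
    finally show "integral {0..1} (\<lambda>x. (g j x)^4) / (\<rho>^j)^3 \<le> 2 * B^4 * \<rho>^j" .
  qed (use \<rho>0 in \<open>auto intro: sum_nonneg\<close>)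
  also have "... = 2 * B^4 * (\<Sum>j<N. \<rho>^j)^4"
  proof -
    have "(\<Sum>j<N. 2 * B^4 * \<rho>^j) = 2 * B^4 * (\<Sum>j<N. \<rho>^j)" by (simp add: sum_distrib_left)
    then show ?thesis by (simp only: power3_eq_cube power4_eq_xxxx mult_ac)
  qed
  also have "... \<le> 2 * B^4 * (1 / (1 - \<rho>))^4"
  proof -
    have "(\<Sum>j<N. \<rho>^j) \<le> 1 / (1 - \<rho>)"
      using geometric_sum_less[OF \<rho>0 \<rho>1, of "{..<N}"] by simp
    moreover have "0 \<le> (\<Sum>j<N. \<rho>^j)" using \<rho>0 by (auto intro: sum_nonneg)
    ultimately show ?thesis using B by (intro mult_left_mono power_mono) auto
  qed
  also have "... = 2 * B^4 / (1 - 2 powr ((3 - 4*\<beta>)/4))^4"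
    unfolding \<rho>_def by (simp add: power_divide)
  finally show ?thesis .
qed


abbreviation M01 :: "real measure" where "M01 \<equiv> restrict_space lborel {0..1}"

lemma space_M01[simp]: "space M01 = {0..1}" by simp

lemma finite_M01: "finite_measure M01"
  by (intro finite_measureI) (simp add: emeasure_restrict_space)

lemma LINT01: "(LINT x:{0..1}|lborel. f x) = integral\<^sup>L M01 (f :: real \<Rightarrow> real)"
  unfolding set_lebesgue_integral_def by (subst integral_restrict_space) auto

lemma SI01: "set_integrable lborel {0..1} f \<longleftrightarrow> integrable M01 (f :: real \<Rightarrow> real)"
  by (rule set_integrable_eq) simp

lemma SBM01: "set_borel_measurable lborel {0..1} (f :: real \<Rightarrow> real) \<longleftrightarrow> f \<in> borel_measurable M01"
  by (simp add: set_borel_measurable_def borel_measurable_restrict_space_iff)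

lemma cont_meas01: "continuous_on UNIV f \<Longrightarrow> (f :: real \<Rightarrow> real) \<in> borel_measurable M01"
  by (intro measurable_restrict_space1) (simp add: borel_measurable_continuous_onI)

lemma efun'_meas: "efun' k \<in> borel_measurable M01"
  unfolding efun'_def by (intro cont_meas01 continuous_intros)

lemma abs_powr2: "\<bar>y::real\<bar> powr 2 = y^2"
  by simp

lemma Lp2_eq: "Lp_norm 2 f = sqrt (integral\<^sup>L M01 (\<lambda>x. (f x)^2))"
proof -
  have "Lp_norm 2 f = (integral\<^sup>L M01 (\<lambda>x. (f x)^2)) powr (1/2)"
    unfolding Lp_norm_def LINT01 by simp
  also have "... = sqrt (integral\<^sup>L M01 (\<lambda>x. (f x)^2))"
    by (rule powr_half_sqrt) simp
  finally show ?thesis .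
qed

lemma inL2_M01: "in_L2 f \<Longrightarrow> f \<in> borel_measurable M01 \<and> integrable M01 (\<lambda>x. (f x)^2)"
  unfolding in_L2_def SI01 SBM01 by simp

lemma efun'_abs: "\<bar>efun' k x\<bar> \<le> sqrt 2 * real k * pi"
proof -
  have "real k * pi * \<bar>cos (real k * pi * x)\<bar> \<le> real k * pi * 1"
    by (intro mult_left_mono) auto
  then show ?thesis unfolding efun'_def by (simp add: abs_mult)
qed

lemma sq_meas_int:
  assumes "f \<in> borel_measurable M01" "integrable M01 (\<lambda>x. (f x)^2)"
  shows "integrable M01 (\<lambda>z. (f z)^2 * efun' k z)"
proof (rule Bochner_Integration.integrable_bound[where f="\<lambda>z. sqrt 2 * real k * pi * (f z)^2"])
  show "integrable M01 (\<lambda>z. sqrt 2 * real k * pi * (f z)^2)" using assms(2) by simp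
  show "(\<lambda>z. (f z)^2 * efun' k z) \<in> borel_measurable M01" using assms(1) efun'_meas by measurable
  show "AE x in M01. norm ((f x)^2 * efun' k x) \<le> norm (sqrt 2 * real k * pi * (f x)^2)"
  proof (intro AE_I2)
    fix z
    have "(f z)^2 * \<bar>efun' k z\<bar> \<le> (f z)^2 * (sqrt 2 * real k * pi)"
      using efun'_abs[of k z] by (intro mult_left_mono) auto
    then show "norm ((f z)^2 * efun' k z) \<le> norm (sqrt 2 * real k * pi * (f z)^2)"
      by (simp add: abs_mult mult.commute)
  qed
qed

lemma dx_coeff_M01: "dx_coeff g k = - integral\<^sup>L M01 (\<lambda>x. g x * efun' k x)"
  unfolding dx_coeff_def LINT01 ..

lemma dk_bound:
  assumes "f \<in> borel_measurable M01" "integrable M01 (\<lambda>x. (f x)^2)"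
  shows "\<bar>dx_coeff (\<lambda>z. (f z)^2) k\<bar> \<le> sqrt 2 * real k * pi * integral\<^sup>L M01 (\<lambda>x. (f x)^2)"
proof -
  have "\<bar>integral\<^sup>L M01 (\<lambda>z. (f z)^2 * efun' k z)\<bar> \<le> integral\<^sup>L M01 (\<lambda>z. sqrt 2 * real k * pi * (f z)^2)"
  proof (intro integral_abs_bound_integral)
    fix z
    have "(f z)^2 * \<bar>efun' k z\<bar> \<le> (f z)^2 * (sqrt 2 * real k * pi)"
      using efun'_abs[of k z] by (intro mult_left_mono) auto
    then show "\<bar>(f z)^2 * efun' k z\<bar> \<le> sqrt 2 * real k * pi * (f z)^2"
      by (simp add: abs_mult mult.commute)
  qed (use sq_meas_int[OF assms] assms(2) in auto)
  then show ?thesis unfolding dx_coeff_M01 by simp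
qed

lemma prod_eps:
  assumes "a \<in> borel_measurable M01" "b \<in> borel_measurable M01"
    "integrable M01 (\<lambda>x. (a x)^2)" "integrable M01 (\<lambda>x. (b x)^2)"
  shows "integrable M01 (\<lambda>x. \<bar>a x * b x\<bar>)"
    "integral\<^sup>L M01 (\<lambda>x. \<bar>a x * b x\<bar>)
       \<le> sqrt (integral\<^sup>L M01 (\<lambda>x. (a x)^2)) * (1 + integral\<^sup>L M01 (\<lambda>x. (b x)^2)) / 2"
proof -
  define A where "A = integral\<^sup>L M01 (\<lambda>x. (a x)^2)"
  define B where "B = integral\<^sup>L M01 (\<lambda>x. (b x)^2)"
  have A0: "A \<ge> 0" "B \<ge> 0" unfolding A_def B_def by (auto intro: integral_nonneg_AE)
  have pw: "\<bar>a x * b x\<bar> \<le> (a x)^2 / (2*e) + e * (b x)^2 / 2" if "e > 0" for x e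
  proof -
    have "0 \<le> (\<bar>a x\<bar> / sqrt e - sqrt e * \<bar>b x\<bar>)^2" by simp
    also have "... = (a x)^2 / e - 2 * \<bar>a x * b x\<bar> + e * (b x)^2"
      using that by (simp add: power2_diff power_divide abs_mult field_simps)
    finally show ?thesis using that by (simp add: field_simps)
  qed
  show i: "integrable M01 (\<lambda>x. \<bar>a x * b x\<bar>)"
  proof (rule Bochner_Integration.integrable_bound[where f="\<lambda>x. (a x)^2 / 2 + (b x)^2 / 2"])
    show "integrable M01 (\<lambda>x. (a x)^2 / 2 + (b x)^2 / 2)" using assms by simp
    show "(\<lambda>x. \<bar>a x * b x\<bar>) \<in> borel_measurable M01" using assms by measurable
    show "AE x in M01. norm \<bar>a x * b x\<bar> \<le> norm ((a x)^2 / 2 + (b x)^2 / 2)"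
      using pw[of 1] by auto
  qed
  have le: "integral\<^sup>L M01 (\<lambda>x. \<bar>a x * b x\<bar>) \<le> A / (2*e) + e * B / 2" if "e > 0" for e
  proof -
    have "integral\<^sup>L M01 (\<lambda>x. \<bar>a x * b x\<bar>) \<le> integral\<^sup>L M01 (\<lambda>x. (a x)^2 / (2*e) + e * (b x)^2 / 2)"
      using i assms pw[OF that] by (intro integral_mono) auto
    also have "... = A / (2*e) + e * B / 2" unfolding A_def B_def using assms by simp
    finally show ?thesis .
  qed
  show "integral\<^sup>L M01 (\<lambda>x. \<bar>a x * b x\<bar>) \<le> sqrt A * (1 + B) / 2"
  proof (rule field_le_epsilon)
    fix \<epsilon> :: real assume \<epsilon>: "\<epsilon> > 0"
    define d where "d = 2 * \<epsilon> / (1 + B)"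
    have d: "d > 0" unfolding d_def using \<epsilon> A0 by simp
    define e where "e = sqrt A + d"
    have e0: "e > 0" unfolding e_def using d A0 by (simp add: add_nonneg_pos)
    have "A \<le> e^2" unfolding e_def using A0 d by (simp add: power2_sum)
    hence "A / (2*e) \<le> e / 2" using e0 by (simp add: field_simps power2_eq_square)
    hence "integral\<^sup>L M01 (\<lambda>x. \<bar>a x * b x\<bar>) \<le> e * (1 + B) / 2" using le[OF e0] by (simp add: field_simps)
    also have "... = sqrt A * (1 + B) / 2 + d * (1 + B) / 2" unfolding e_def by (simp add: field_simps)
    also have "d * (1 + B) / 2 = \<epsilon>" unfolding d_def using A0 by (simp add: field_simps)
    finally show "integral\<^sup>L M01 (\<lambda>x. \<bar>a x * b x\<bar>) \<le> sqrt A * (1 + B) / 2 + \<epsilon>" .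
  qed
qed

lemma pm_sq:
  fixes f g :: "real \<Rightarrow> real" and s :: real
  assumes "f \<in> borel_measurable M01" "g \<in> borel_measurable M01"
    "integrable M01 (\<lambda>x. (f x)^2)" "integrable M01 (\<lambda>x. (g x)^2)"
  shows "integrable M01 (\<lambda>x. (f x + s * g x)^2)"
    "integral\<^sup>L M01 (\<lambda>x. (f x + s * g x)^2) \<le> 2 * integral\<^sup>L M01 (\<lambda>x. (f x)^2) + 2 * s^2 * integral\<^sup>L M01 (\<lambda>x. (g x)^2)"
proof -
  have pw: "(f x + s * g x)^2 \<le> 2 * (f x)^2 + 2 * s^2 * (g x)^2" for x
  proof -
    have "0 \<le> (f x - s * g x)^2" by (rule zero_le_power2)
    then show ?thesis by (simp add: power2_sum power2_diff power_mult_distrib)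
  qed
  show i: "integrable M01 (\<lambda>x. (f x + s * g x)^2)"
  proof (rule Bochner_Integration.integrable_bound[where f="\<lambda>x. 2 * (f x)^2 + 2 * s^2 * (g x)^2"])
    show "integrable M01 (\<lambda>x. 2 * (f x)^2 + 2 * s^2 * (g x)^2)" using assms by simp
    show "(\<lambda>x. (f x + s * g x)^2) \<in> borel_measurable M01" using assms by measurable
    show "AE x in M01. norm ((f x + s * g x)^2) \<le> norm (2 * (f x)^2 + 2 * s^2 * (g x)^2)"
      using pw by (auto intro!: AE_I2)
  qed
  have "integral\<^sup>L M01 (\<lambda>x. (f x + s * g x)^2) \<le> integral\<^sup>L M01 (\<lambda>x. 2 * (f x)^2 + 2 * s^2 * (g x)^2)"
    using i assms pw by (intro integral_mono) auto
  also have "... = 2 * integral\<^sup>L M01 (\<lambda>x. (f x)^2) + 2 * s^2 * integral\<^sup>L M01 (\<lambda>x. (g x)^2)"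
    using assms by simp
  finally show "integral\<^sup>L M01 (\<lambda>x. (f x + s * g x)^2) \<le> 2 * integral\<^sup>L M01 (\<lambda>x. (f x)^2) + 2 * s^2 * integral\<^sup>L M01 (\<lambda>x. (g x)^2)" .
qed

lemma dk_diff:
  fixes f g :: "real \<Rightarrow> real"
  assumes f: "f \<in> borel_measurable M01" "integrable M01 (\<lambda>x. (f x)^2)"
    and g: "g \<in> borel_measurable M01" "integrable M01 (\<lambda>x. (g x)^2)"
  shows "\<bar>dx_coeff (\<lambda>z. (f z)^2) k - dx_coeff (\<lambda>z. (g z)^2) k\<bar>
     \<le> sqrt 2 * real k * pi * (sqrt (integral\<^sup>L M01 (\<lambda>x. (f x - g x)^2))
          * (1 + integral\<^sup>L M01 (\<lambda>x. (f x + g x)^2)) / 2)"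
proof -
  have im: "integrable M01 (\<lambda>x. (f x + (-1) * g x)^2)" "integrable M01 (\<lambda>x. (f x + 1 * g x)^2)"
    using pm_sq(1)[OF f(1) g(1) f(2) g(2)] by blast+
  have ia: "integrable M01 (\<lambda>x. (f x - g x)^2)" "integrable M01 (\<lambda>x. (f x + g x)^2)"
    using im by simp_all
  have pe: "integrable M01 (\<lambda>x. \<bar>(f x - g x) * (f x + g x)\<bar>)"
    "integral\<^sup>L M01 (\<lambda>x. \<bar>(f x - g x) * (f x + g x)\<bar>)
       \<le> sqrt (integral\<^sup>L M01 (\<lambda>x. (f x - g x)^2)) * (1 + integral\<^sup>L M01 (\<lambda>x. (f x + g x)^2)) / 2"
    using prod_eps[of "\<lambda>x. f x - g x" "\<lambda>x. f x + g x"] f g ia by auto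
  have "dx_coeff (\<lambda>z. (f z)^2) k - dx_coeff (\<lambda>z. (g z)^2) k
      = - integral\<^sup>L M01 (\<lambda>z. (f z)^2 * efun' k z - (g z)^2 * efun' k z)"
    unfolding dx_coeff_M01 using sq_meas_int[OF f, of k] sq_meas_int[OF g, of k] by simp
  also have "... = - integral\<^sup>L M01 (\<lambda>z. ((f z - g z) * (f z + g z)) * efun' k z)"
    by (simp add: algebra_simps power2_eq_square)
  finally have eq: "dx_coeff (\<lambda>z. (f z)^2) k - dx_coeff (\<lambda>z. (g z)^2) k
      = - integral\<^sup>L M01 (\<lambda>z. ((f z - g z) * (f z + g z)) * efun' k z)" .
  have "\<bar>integral\<^sup>L M01 (\<lambda>z. ((f z - g z) * (f z + g z)) * efun' k z)\<bar>
     \<le> integral\<^sup>L M01 (\<lambda>z. sqrt 2 * real k * pi * \<bar>(f z - g z) * (f z + g z)\<bar>)"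
  proof (intro integral_abs_bound_integral)
    fix z
    have "\<bar>(f z - g z) * (f z + g z)\<bar> * \<bar>efun' k z\<bar> \<le> \<bar>(f z - g z) * (f z + g z)\<bar> * (sqrt 2 * real k * pi)"
      using efun'_abs[of k z] by (intro mult_left_mono) auto
    then show "\<bar>((f z - g z) * (f z + g z)) * efun' k z\<bar> \<le> sqrt 2 * real k * pi * \<bar>(f z - g z) * (f z + g z)\<bar>"
      by (metis abs_mult mult.commute)
    show "integrable M01 (\<lambda>z. sqrt 2 * real k * pi * \<bar>(f z - g z) * (f z + g z)\<bar>)"
      using pe(1) by simp
    show "integrable M01 (\<lambda>z. ((f z - g z) * (f z + g z)) * efun' k z)"
    proof (rule Bochner_Integration.integrable_bound[where f="\<lambda>z. sqrt 2 * real k * pi * \<bar>(f z - g z) * (f z + g z)\<bar>"])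
      show "integrable M01 (\<lambda>z. sqrt 2 * real k * pi * \<bar>(f z - g z) * (f z + g z)\<bar>)"
        using pe(1) by simp
      show "(\<lambda>z. ((f z - g z) * (f z + g z)) * efun' k z) \<in> borel_measurable M01"
        using f g efun'_meas by measurable
      show "AE x in M01. norm (((f x - g x) * (f x + g x)) * efun' k x) \<le> norm (sqrt 2 * real k * pi * \<bar>(f x - g x) * (f x + g x)\<bar>)"
      proof (intro AE_I2)
        fix z
        have "\<bar>(f z - g z) * (f z + g z)\<bar> * \<bar>efun' k z\<bar> \<le> \<bar>(f z - g z) * (f z + g z)\<bar> * (sqrt 2 * real k * pi)"
          using efun'_abs[of k z] by (intro mult_left_mono) auto
        then show "norm (((f z - g z) * (f z + g z)) * efun' k z) \<le> norm (sqrt 2 * real k * pi * \<bar>(f z - g z) * (f z + g z)\<bar>)"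
          by (simp only: real_norm_def abs_mult abs_abs abs_of_nonneg[OF pi_ge_zero] abs_of_nonneg[OF of_nat_0_le_iff]
             abs_of_nonneg[OF real_sqrt_ge_zero[OF zero_le_numeral]] mult_ac)
      qed
    qed
  qed
  also have "... \<le> sqrt 2 * real k * pi * (sqrt (integral\<^sup>L M01 (\<lambda>x. (f x - g x)^2))
          * (1 + integral\<^sup>L M01 (\<lambda>x. (f x + g x)^2)) / 2)"
    using pe by (simp add: mult_left_mono)
  finally show ?thesis unfolding eq by simp
qed

lemma dcont:
  fixes w :: "real \<Rightarrow> real \<Rightarrow> real"
  assumes L2: "\<And>t. t \<in> {0..T} \<Longrightarrow> in_L2 (w t)"
    and cont: "\<And>t0. t0 \<in> {0..T} \<Longrightarrow>
       ((\<lambda>t. Lp_norm 2 (\<lambda>x. w t x - w t0 x)) \<longlongrightarrow> 0) (at t0 within {0..T})"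
    and bd: "\<And>t. t \<in> {0..T} \<Longrightarrow> integral\<^sup>L M01 (\<lambda>x. (w t x)^2) \<le> D"
  shows "continuous_on {0..T} (\<lambda>s. dx_coeff (\<lambda>z. (w s z)^2) k)"
  unfolding continuous_on_eq_continuous_within continuous_within
proof
  fix t0 assume t0: "t0 \<in> {0..T}"
  define K where "K = sqrt 2 * real k * pi * (1 + 4 * D) / 2"
  have w0: "w t0 \<in> borel_measurable M01" "integrable M01 (\<lambda>x. (w t0 x)^2)"
    using inL2_M01[OF L2[OF t0]] by auto
  have "((\<lambda>s. dx_coeff (\<lambda>z. (w s z)^2) k - dx_coeff (\<lambda>z. (w t0 z)^2) k) \<longlongrightarrow> 0) (at t0 within {0..T})"
  proof (rule Lim_null_comparison)
    show "((\<lambda>s. K * Lp_norm 2 (\<lambda>x. w s x - w t0 x)) \<longlongrightarrow> 0) (at t0 within {0..T})"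
      using tendsto_mult_right_zero[OF cont[OF t0]] by simp
    show "\<forall>\<^sub>F s in at t0 within {0..T}. norm (dx_coeff (\<lambda>z. (w s z)^2) k - dx_coeff (\<lambda>z. (w t0 z)^2) k)
            \<le> K * Lp_norm 2 (\<lambda>x. w s x - w t0 x)"
      unfolding eventually_at_topological
    proof (intro exI[of _ UNIV] conjI ballI impI; simp only: open_UNIV UNIV_I)
      fix s assume s: "s \<in> {0..T}"
      have ws: "w s \<in> borel_measurable M01" "integrable M01 (\<lambda>x. (w s x)^2)"
        using inL2_M01[OF L2[OF s]] by auto
      have B: "integral\<^sup>L M01 (\<lambda>x. (w s x + 1 * w t0 x)^2) \<le> 4 * D"
        using pm_sq(2)[OF ws(1) w0(1) ws(2) w0(2), of 1] bd[OF s] bd[OF t0] by simp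
      have "norm (dx_coeff (\<lambda>z. (w s z)^2) k - dx_coeff (\<lambda>z. (w t0 z)^2) k)
          \<le> sqrt 2 * real k * pi * (sqrt (integral\<^sup>L M01 (\<lambda>x. (w s x - w t0 x)^2))
          * (1 + integral\<^sup>L M01 (\<lambda>x. (w s x + w t0 x)^2)) / 2)"
        using dk_diff[OF ws w0, of k] by simp
      also have "... \<le> sqrt 2 * real k * pi * (sqrt (integral\<^sup>L M01 (\<lambda>x. (w s x - w t0 x)^2))
          * (1 + 4 * D) / 2)"
        using B by (intro mult_left_mono divide_right_mono) auto
      also have "... = K * Lp_norm 2 (\<lambda>x. w s x - w t0 x)"
        unfolding K_def Lp2_eq by simp
      finally show "norm (dx_coeff (\<lambda>z. (w s z)^2) k - dx_coeff (\<lambda>z. (w t0 z)^2) k)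
            \<le> K * Lp_norm 2 (\<lambda>x. w s x - w t0 x)" .
    qed
  qed
  then show "((\<lambda>s. dx_coeff (\<lambda>z. (w s z)^2) k) \<longlongrightarrow> dx_coeff (\<lambda>z. (w t0 z)^2) k) (at t0 within {0..T})"
    by (rule LIM_zero_cancel)
qed

lemma time_int:
  fixes dd :: "nat \<Rightarrow> real \<Rightarrow> real" and \<mu> :: "nat \<Rightarrow> real"
  assumes t: "0 \<le> t" "t \<le> T" and dc: "\<And>k. continuous_on {0..T} (dd k)"
  shows "(LBINT s=0..t. (\<Sum>k\<in>{1..N}. exp (- \<mu> k * (t - s)) * dd k s * efun k x))
       = (\<Sum>k\<in>{1..N}. integral {0..t} (\<lambda>s. exp (- \<mu> k * (t - s)) * dd k s) * efun k x)"
proof -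
  have dc': "continuous_on {0..t} (dd k)" for k using t by (intro continuous_on_subset[OF dc[of k]]) auto
  have c: "continuous_on {0..t} (\<lambda>s. exp (- \<mu> k * (t - s)) * dd k s)" for k
    by (intro continuous_intros dc')
  have c2: "continuous_on {0..t} (\<lambda>s. \<Sum>k\<in>{1..N}. exp (- \<mu> k * (t - s)) * dd k s * efun k x)"
    by (intro continuous_intros dc')
  have "set_integrable lborel {0..t} (\<lambda>s. \<Sum>k\<in>{1..N}. exp (- \<mu> k * (t - s)) * dd k s * efun k x)"
    unfolding set_integrable_def by (rule borel_integrable_compact[OF compact_Icc c2])
  then have "(LBINT s=0..t. (\<Sum>k\<in>{1..N}. exp (- \<mu> k * (t - s)) * dd k s * efun k x))
      = integral {0..t} (\<lambda>s. \<Sum>k\<in>{1..N}. exp (- \<mu> k * (t - s)) * dd k s * efun k x)"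
    using t interval_integral_eq_integral[of 0 t] by (simp add: zero_ereal_def)
  also have "... = (\<Sum>k\<in>{1..N}. integral {0..t} (\<lambda>s. exp (- \<mu> k * (t - s)) * dd k s * efun k x))"
    by (intro integral_sum) (auto intro!: integrable_continuous_real continuous_intros dc')
  also have "... = (\<Sum>k\<in>{1..N}. integral {0..t} (\<lambda>s. exp (- \<mu> k * (t - s)) * dd k s) * efun k x)"
    by (intro sum.cong refl integral_mult_left)
  finally show ?thesis .
qed

lemma exp_int_bound:
  fixes dd :: "real \<Rightarrow> real"
  assumes \<mu>: "\<mu> > 0" and t: "0 \<le> t" and dc: "continuous_on {0..t} dd"
    and bd: "\<And>s. s \<in> {0..t} \<Longrightarrow> \<bar>dd s\<bar> \<le> K"
  shows "\<bar>integral {0..t} (\<lambda>s. exp (- \<mu> * (t - s)) * dd s)\<bar> \<le> K / \<mu>"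
proof -
  have K0: "K \<ge> 0" using bd[of 0] t by auto
  have hi: "((\<lambda>s. exp (- \<mu> * (t - s))) has_integral (exp (- \<mu> * (t - t)) / \<mu> - exp (- \<mu> * (t - 0)) / \<mu>)) {0..t}"
  proof (rule fundamental_theorem_of_calculus[OF t])
    fix s assume "s \<in> {0..t}"
    show "((\<lambda>s. exp (- \<mu> * (t - s)) / \<mu>) has_vector_derivative exp (- \<mu> * (t - s))) (at s within {0..t})"
      using \<mu> by (auto intro!: derivative_eq_intros simp: has_real_derivative_iff_has_vector_derivative[symmetric])
  qed
  have "\<bar>integral {0..t} (\<lambda>s. exp (- \<mu> * (t - s)) * dd s)\<bar> \<le> integral {0..t} (\<lambda>s. exp (- \<mu> * (t - s)) * K)"
    unfolding real_norm_def[symmetric]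
  proof (rule integral_norm_bound_integral)
    show "(\<lambda>s. exp (- \<mu> * (t - s)) * dd s) integrable_on {0..t}"
      by (intro integrable_continuous_real continuous_intros dc)
    show "(\<lambda>s. exp (- \<mu> * (t - s)) * K) integrable_on {0..t}"
      by (intro integrable_continuous_real continuous_intros)
    fix s assume "s \<in> {0..t}"
    then show "norm (exp (- \<mu> * (t - s)) * dd s) \<le> exp (- \<mu> * (t - s)) * K"
      using bd by (auto simp: abs_mult intro!: mult_left_mono)
  qed
  also have "... = (1 - exp (- \<mu> * t)) / \<mu> * K"
    using integral_unique[OF hi] by (simp add: diff_divide_distrib)
  also have "... \<le> K / \<mu>"
    using \<mu> K0 by (simp add: field_simps)
  finally show ?thesis .
qed

lemma Lp4_eq: "Lp_norm 4 (\<lambda>x. \<Sum>k\<in>K. c k * efun k x)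
     = (integral {0..1} (\<lambda>x. (\<Sum>k\<in>K. c k * efun k x)^4)) powr (1/4)"
proof -
  have cc: "continuous_on {0..1} (\<lambda>x. (\<Sum>k\<in>K. c k * efun k x)^4)"
    unfolding efun_def by (intro continuous_intros)
  have si: "set_integrable lborel {0..1} (\<lambda>x. (\<Sum>k\<in>K. c k * efun k x)^4)"
    unfolding set_integrable_def by (rule borel_integrable_compact[OF compact_Icc cc])
  have "(LINT x:{0..1}|lborel. \<bar>\<Sum>k\<in>K. c k * efun k x\<bar> powr 4)
      = (LINT x:{0..1}|lborel. (\<Sum>k\<in>K. c k * efun k x)^4)"
    by (simp add: power_even_abs_numeral)
  also have "... = integral {0..1} (\<lambda>x. (\<Sum>k\<in>K. c k * efun k x)^4)"
    by (rule set_borel_integral_eq_integral(2)[OF si])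
  finally show ?thesis unfolding Lp_norm_def by simp
qed

theorem mainTheorem17:
  fixes T \<alpha> :: real and v :: "nat \<Rightarrow> real \<Rightarrow> real \<Rightarrow> real"
  assumes "T > 0"
    and "7/4 < \<alpha>" and "\<alpha> < 2"
    and L2: "\<And>N t. N \<ge> 1 \<Longrightarrow> t \<in> {0..T} \<Longrightarrow> in_L2 (v N t)"
    and cont: "\<And>N t0. N \<ge> 1 \<Longrightarrow> t0 \<in> {0..T} \<Longrightarrow>
       ((\<lambda>t. Lp_norm 2 (\<lambda>x. v N t x - v N t0 x)) \<longlongrightarrow> 0) (at t0 within {0..T})"
    and bdd: "\<exists>C. \<forall>N\<ge>1. \<forall>t\<in>{0..T}. Lp_norm 2 (v N t) \<le> C"
  shows "\<exists>C. \<forall>N\<ge>1. \<forall>t\<in>{0..T}. Lp_norm 4 (yN \<alpha> N (v N) t) \<le> C"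
proof -
  obtain C0 where C0: "\<And>N t. N \<ge> 1 \<Longrightarrow> t \<in> {0..T} \<Longrightarrow> Lp_norm 2 (v N t) \<le> C0"
    using bdd by (metis atLeastAtMost_iff)
  define C where "C = max C0 0"
  define \<beta> where "\<beta> = \<alpha> - 1"
  define B where "B = sqrt 2 * C^2 * pi powr (1 - \<alpha>)"
  define K where "K = 2 * B^4 / (1 - 2 powr ((3 - 4*\<beta>)/4))^4"
  have \<beta>: "3/4 < \<beta>" unfolding \<beta>_def using assms(2) by simp
  have B0: "0 \<le> B" unfolding B_def by simp
  have C0': "C \<ge> 0" unfolding C_def by simp
  show ?thesis
  proof (intro exI[of _ "K powr (1/4)"] allI impI ballI)
    fix N :: nat and t assume N: "N \<ge> 1" and t: "t \<in> {0..T}"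
    define dd where "dd k s = dx_coeff (\<lambda>z. (v N s z)^2) k" for k s
    define \<mu> where "\<mu> k = eigval k powr (\<alpha> / 2)" for k
    define c where "c k = integral {0..t} (\<lambda>s. exp (- \<mu> k * (t - s)) * dd k s)" for k
    have IL: "integral\<^sup>L M01 (\<lambda>x. (v N s x)^2) \<le> C^2" if s: "s \<in> {0..T}" for s
    proof -
      have I0: "0 \<le> integral\<^sup>L M01 (\<lambda>x. (v N s x)^2)" by (auto intro: integral_nonneg_AE)
      have "sqrt (integral\<^sup>L M01 (\<lambda>x. (v N s x)^2)) \<le> C"
        using C0[OF N s] unfolding Lp2_eq C_def by simp
      then have "(sqrt (integral\<^sup>L M01 (\<lambda>x. (v N s x)^2)))^2 \<le> C^2"
        by (intro power_mono) auto
      then show ?thesis using I0 by simp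
    qed
    have dc: "continuous_on {0..T} (dd k)" for k
      unfolding dd_def using L2[OF N] cont[OF N] IL by (rule dcont)
    have yeq: "yN \<alpha> N (v N) t = (\<lambda>x. \<Sum>k\<in>{1..N}. c k * efun k x)"
    proof
      fix x
      show "yN \<alpha> N (v N) t x = (\<Sum>k\<in>{1..N}. c k * efun k x)"
        unfolding yN_def c_def \<mu>_def dd_def[symmetric]
        using time_int[where t=t and T=T and dd=dd and N=N and \<mu>="\<lambda>k. eigval k powr (\<alpha> / 2)" and x=x] t dc by simp
    qed
    have cb: "\<bar>c k\<bar> \<le> B * real k powr (- \<beta>)" if k: "k \<in> {1..N}" for k
    proof -
      have kpos: "real k * pi > 0" using k by auto
      have mu: "\<mu> k = (real k * pi) powr \<alpha>"
      proof -
        have "eigval k = (real k * pi) powr 2" unfolding eigval_def using kpos by simp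
        then show ?thesis unfolding \<mu>_def by (simp only: powr_powr) simp
      qed
      have mu0: "\<mu> k > 0" unfolding mu using kpos k by simp
      have "\<bar>c k\<bar> \<le> sqrt 2 * real k * pi * C^2 / \<mu> k"
        unfolding c_def
      proof (rule exp_int_bound[OF mu0])
        show "0 \<le> t" using t by simp
        show "continuous_on {0..t} (dd k)" using t by (intro continuous_on_subset[OF dc]) auto
        fix s assume s: "s \<in> {0..t}"
        then have sT: "s \<in> {0..T}" using t by auto
        have "\<bar>dd k s\<bar> \<le> sqrt 2 * real k * pi * integral\<^sup>L M01 (\<lambda>x. (v N s x)^2)"
          unfolding dd_def using inL2_M01[OF L2[OF N sT]] by (intro dk_bound) auto
        also have "... \<le> sqrt 2 * real k * pi * C^2"
          using IL[OF sT] by (intro mult_left_mono) auto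
        finally show "\<bar>dd k s\<bar> \<le> sqrt 2 * real k * pi * C^2" .
      qed
      also have "sqrt 2 * real k * pi * C^2 / \<mu> k = sqrt 2 * C^2 * ((real k * pi) powr 1 / (real k * pi) powr \<alpha>)"
        using kpos by (simp add: mu)
      also have "... = sqrt 2 * C^2 * ((real k * pi) powr (1 - \<alpha>))"
        by (simp add: powr_diff)
      also have "... = B * real k powr (- \<beta>)"
        unfolding B_def \<beta>_def using kpos by (simp add: powr_mult)
      finally show ?thesis .
    qed
    have "integral {0..1} (\<lambda>x. (\<Sum>k\<in>{1..N}. c k * efun k x)^4) \<le> K"
      unfolding K_def by (rule L4_bound[OF \<beta> B0 cb])
    moreover have "0 \<le> integral {0..1} (\<lambda>x. (\<Sum>k\<in>{1..N}. c k * efun k x)^4)"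
      by (intro integral_nonneg integrable_continuous_real continuous_intros) (auto simp: efun_def intro!: continuous_intros)
    ultimately show "Lp_norm 4 (yN \<alpha> N (v N) t) \<le> K powr (1/4)"
      unfolding yeq Lp4_eq by (intro powr_mono2) auto
  qed
qed

end
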